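(* There exists an instance of the throughput-constrained online resource allocation problem (a fixed choice of all primitives, with the horizon $T$ ranging over multiples of $K$) in which the Naive Primal-Dual Algorithm incurs linear regret, i.e. $\textsc{Reg}=V^\pi[\omega]-V^{\textsc{off}}[\omega]=\Omega(T)$, for any stepsize $\eta=O(1)$.
   Context: Model. There are $m$ resources and $n$ arrival types. Type $j\in[n]$ has an assignment cost vector $c_j\in\mathbb R^m$ and a set $\mathcal S_j\subseteq[m]$ of allowed resources. The horizon has $T$ periods partitioned into $K=\Theta(1)$ epochs ($T$ a multiple of $K$), epoch $k$ being periods $(k-1)T/K+1,\dots,kT/K$; $k^t$ denotes the epoch containing period $t$. In period $t$ one arrival of type $j^t$ occurs, $j^t$ i.i.d. with $\mathbb P(j^t=j)=p_j$; write $c^t=c_{j^t}$ and $\Lambda_j(t_1:t_2)=\sum_{t_1<\tau\le t_2}\mathbf 1\{j^\tau=j\}$. The decision-maker chooses $x^t\in\mathcal X^t=\{x\in\{0,1\}^m:\sum_ix_i\le1,\ x_i=0\ \forall i\notin\mathcal S_{j^t}\}$ at cost $\sum_ic^t_ix^t_i$. Each epoch $k$ and resource $i$ has a target $\rho_{ki}\in[0,1]$ and a convex $L$-Lipschitz deviation cost $g_{ki}:[0,1]\to\mathbb R_{\ge0}$ with $g_{ki}(\rho_{ki})=0$. The cost of a policy is $V^\pi[\omega]=\sum_{t}\sum_ic^t_ix^t_i+\frac TK\sum_{k}\sum_ik\,g_{ki}\big(\sum_{t\le kT/K}x^t_i/(kT/K)\big)$, and $V^{\textsc{off}}[\omega]$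 is the minimum of the same expression over all $x^t\in\mathcal X^t$, $t\in[T]$, chosen with full knowledge of $\omega=(j^1,\dots,j^T)$. Naive Primal-Dual Algorithm (stepsize $\eta=O(1)$, initial shadow prices $\mu^1\in\mathbb R^{K\times m}$): for each $t=1,\dots,T$, observe the arrival; choose $x^t\in\arg\min_{x\in\mathcal X^t}\sum_ix_i\big(c^t_i-\sum_{k\ge k^t}\mu^t_{ki}\big)$; for all $k\ge k^t$ and $i$ compute $a^t_{ki}\in\arg\min_{a\in[0,1]}g_{ki}(a)+\mu^t_{ki}a$; update $\mu^{t+1}_{ki}=\mu^t_{ki}+\eta(a^t_{ki}-x^t_i)$ for $k\ge k^t$. *)

theory Defs
  imports "HOL-Analysis.Analysis" "HOL-Library.FuncSet"
begin

text \<open>Resources are indexed by i < m, arrival types by j < n, periods by t in {1..T},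
  epochs by k in {1..K}.\<close>

record pd_instance =
  nres   :: nat
  ntyp   :: nat
  nep    :: nat
  cost   :: "nat \<Rightarrow> nat \<Rightarrow> real"          (* cost j i = (c_j)_i *)
  allowed :: "nat \<Rightarrow> nat set"
  prob   :: "nat \<Rightarrow> real"
  target :: "nat \<Rightarrow> nat \<Rightarrow> real"
  dev    :: "nat \<Rightarrow> nat \<Rightarrow> real \<Rightarrow> real"
  lip    :: real

definition valid_instance :: "pd_instance \<Rightarrow> bool" where
  "valid_instance I \<longleftrightarrow>
     nres I \<ge> 1 \<and> ntyp I \<ge> 1 \<and> nep I \<ge> 1 \<and> lip I \<ge> 0 \<and>
     (\<forall>j<ntyp I. allowed I j \<subseteq> {..<nres I}) \<and>
     (\<forall>j<ntyp I. prob I j \<ge> 0) \<and> (\<Sum>j<ntyp I. prob I j) = 1 \<and>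
     (\<forall>k\<in>{1..nep I}. \<forall>i<nres I.
        target I k i \<in> {0..1} \<and>
        convex_on {0..1} (dev I k i) \<and>
        (\<forall>a\<in>{0..1}. \<forall>b\<in>{0..1}. \<bar>dev I k i a - dev I k i b\<bar> \<le> lip I * \<bar>a - b\<bar>) \<and>
        (\<forall>a\<in>{0..1}. dev I k i a \<ge> 0) \<and>
        dev I k i (target I k i) = 0)"

text \<open>Epoch k^t containing period t (T a multiple of K).\<close>
definition epoch :: "pd_instance \<Rightarrow> nat \<Rightarrow> nat \<Rightarrow> nat" where
  "epoch I T t = (t - 1) div (T div nep I) + 1"

text \<open>Sample paths omega = (j^1,...,j^T), as extensional functions on {1..T}.\<close>
definition arrivals :: "pd_instance \<Rightarrow> nat \<Rightarrow> (nat \<Rightarrow> nat) set" where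
  "arrivals I T = {1..T} \<rightarrow>\<^sub>E {..<ntyp I}"

definition path_prob :: "pd_instance \<Rightarrow> nat \<Rightarrow> (nat \<Rightarrow> nat) \<Rightarrow> real" where
  "path_prob I T \<omega> = (\<Prod>t\<in>{1..T}. prob I (\<omega> t))"

text \<open>x in X^t (x given as a function of the resource index).\<close>
definition feasible :: "pd_instance \<Rightarrow> (nat \<Rightarrow> nat) \<Rightarrow> nat \<Rightarrow> (nat \<Rightarrow> real) \<Rightarrow> bool" where
  "feasible I \<omega> t x \<longleftrightarrow>
     (\<forall>i<nres I. x i \<in> {0, 1}) \<and> (\<Sum>i<nres I. x i) \<le> 1 \<and>
     (\<forall>i<nres I. i \<notin> allowed I (\<omega> t) \<longrightarrow> x i = 0)"

definition total_cost :: "pd_instance \<Rightarrow> nat \<Rightarrow> (nat \<Rightarrow> nat) \<Rightarrow> (nat \<Rightarrow> nat \<Rightarrow> real) \<Rightarrow> real" where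
  "total_cost I T \<omega> x =
     (\<Sum>t\<in>{1..T}. \<Sum>i<nres I. cost I (\<omega> t) i * x t i)
     + real T / real (nep I) *
       (\<Sum>k\<in>{1..nep I}. \<Sum>i<nres I.
          real k * dev I k i ((\<Sum>t\<in>{1..k * (T div nep I)}. x t i) / (real k * real T / real (nep I))))"

definition offline_opt :: "pd_instance \<Rightarrow> nat \<Rightarrow> (nat \<Rightarrow> nat) \<Rightarrow> real" where
  "offline_opt I T \<omega> =
     Inf {total_cost I T \<omega> x | x. \<forall>t\<in>{1..T}. feasible I \<omega> t (x t)}"

text \<open>A run (x, a, mu) of the Naive Primal-Dual Algorithm on omega with stepsize eta and
  initial prices mu1, with arbitrary tie-breaking in the argmins.
  x t i = x^t_i, a t k i = a^t_{ki}, mu t k i = mu^t_{ki}.\<close>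
definition is_run ::
  "pd_instance \<Rightarrow> nat \<Rightarrow> real \<Rightarrow> (nat \<Rightarrow> nat \<Rightarrow> real) \<Rightarrow> (nat \<Rightarrow> nat) \<Rightarrow>
   (nat \<Rightarrow> nat \<Rightarrow> real) \<times> (nat \<Rightarrow> nat \<Rightarrow> nat \<Rightarrow> real) \<times> (nat \<Rightarrow> nat \<Rightarrow> nat \<Rightarrow> real) \<Rightarrow> bool" where
  "is_run I T \<eta> \<mu>1 \<omega> r \<longleftrightarrow>
     (case r of (x, a, \<mu>) \<Rightarrow>
       (\<forall>k\<in>{1..nep I}. \<forall>i<nres I. \<mu> 1 k i = \<mu>1 k i) \<and>
       (\<forall>t\<in>{1..T}.
          feasible I \<omega> t (x t) \<and>
          (\<forall>y. feasible I \<omega> t y \<longrightarrow>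
             (\<Sum>i<nres I. x t i * (cost I (\<omega> t) i - (\<Sum>k\<in>{epoch I T t..nep I}. \<mu> t k i)))
             \<le> (\<Sum>i<nres I. y i * (cost I (\<omega> t) i - (\<Sum>k\<in>{epoch I T t..nep I}. \<mu> t k i)))) \<and>
          (\<forall>k\<in>{epoch I T t..nep I}. \<forall>i<nres I.
             a t k i \<in> {0..1} \<and>
             (\<forall>b\<in>{0..1}. dev I k i (a t k i) + \<mu> t k i * a t k i \<le> dev I k i b + \<mu> t k i * b) \<and>
             \<mu> (Suc t) k i = \<mu> t k i + \<eta> * (a t k i - x t i)) \<and>
          (\<forall>k\<in>{1..<epoch I T t}. \<forall>i<nres I. \<mu> (Suc t) k i = \<mu> t k i)))"

definition expected_regret ::
  "pd_instance \<Rightarrow> nat \<Rightarrow> ((nat \<Rightarrow> nat) \<Rightarrow>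
     (nat \<Rightarrow> nat \<Rightarrow> real) \<times> (nat \<Rightarrow> nat \<Rightarrow> nat \<Rightarrow> real) \<times> (nat \<Rightarrow> nat \<Rightarrow> nat \<Rightarrow> real)) \<Rightarrow> real" where
  "expected_regret I T run =
     (\<Sum>\<omega>\<in>arrivals I T. path_prob I T \<omega> *
        (total_cost I T \<omega> (fst (run \<omega>)) - offline_opt I T \<omega>))"

end

theory Submission
  imports Defs
begin

definition I0 :: pd_instance where
  "I0 = \<lparr>nres = 1, ntyp = 1, nep = 2, cost = (\<lambda>j i. 0), allowed = (\<lambda>j. {0}),
         prob = (\<lambda>j. 1), target = (\<lambda>k i. if k = 1 then 1 else 1/2),
         dev = (\<lambda>k i a. if k = 1 then 1 - a else dist (1/2) a), lip = 1\<rparr>"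

lemma convex_lin: "convex_on {0..1::real} (\<lambda>a. 1 - a)"
  by (rule convex_on_linorderI) (auto simp: algebra_simps)

lemma valid_I0: "valid_instance I0"
proof -
  have c2: "convex_on {0..1::real} (\<lambda>a. dist (1/2) a)"
    by (rule convex_on_dist) simp
  have "\<And>k. k \<in> {1..2::nat} \<Longrightarrow> k = 1 \<or> k = 2" by auto
  then show ?thesis
    unfolding valid_instance_def I0_def
    using convex_lin c2 by (auto simp: dist_real_def abs_le_iff)
qed

lemma cost_eq:
  assumes h: "h > 0" and T: "T = 2 * h"
  shows "total_cost I0 T \<omega> x = real h - (\<Sum>t\<in>{1..h}. x t 0) + \<bar>real h - (\<Sum>t\<in>{1..2*h}. x t 0)\<bar>"
proof -
  have hd: "T div 2 = h" using T by simp
  have k2: "{1..2::nat} = {1,2}" by auto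
  have nepI: "nep I0 = 2" by (simp add: I0_def)
  have "total_cost I0 T \<omega> x = real h * (1 - (\<Sum>t\<in>{1..h}. x t 0) / real h) + 2 * real h * \<bar>1/2 - (\<Sum>t\<in>{1..2*h}. x t 0) / (2 * real h)\<bar>"
    unfolding total_cost_def nepI k2 by (simp add: I0_def hd T dist_real_def ring_distribs)
  also have "\<dots> = real h - (\<Sum>t\<in>{1..h}. x t 0) + \<bar>real h - (\<Sum>t\<in>{1..2*h}. x t 0)\<bar>"
  proof -
    have "2 * real h * \<bar>1/2 - (\<Sum>t\<in>{1..2*h}. x t 0) / (2 * real h)\<bar> = \<bar>2 * real h * (1/2 - (\<Sum>t\<in>{1..2*h}. x t 0) / (2 * real h))\<bar>"
      using h by (simp add: abs_mult)
    also have "2 * real h * (1/2 - (\<Sum>t\<in>{1..2*h}. x t 0) / (2 * real h)) = real h - (\<Sum>t\<in>{1..2*h}. x t 0)"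
      using h by (simp add: field_simps)
    finally show ?thesis using h by (simp add: field_simps)
  qed
  finally show ?thesis .
qed

lemma cost_lb:
  assumes h: "h > 0" and T: "T = 2 * h"
  shows "total_cost I0 T \<omega> x \<ge> (\<Sum>t\<in>{h+1..2*h}. x t 0)"
proof -
  have "{1..2*h} = {1..h} \<union> {h+1..2*h}" by auto
  then have sp: "(\<Sum>t\<in>{1..2*h}. x t 0) = (\<Sum>t\<in>{1..h}. x t 0) + (\<Sum>t\<in>{h+1..2*h}. x t 0)"
    by (simp add: sum.union_disjoint)
  show ?thesis unfolding cost_eq[OF h T] sp by linarith
qed

lemma feasible_I0: "feasible I0 \<omega> t y \<longleftrightarrow> y 0 \<in> {0, 1}"
  by (auto simp add: feasible_def I0_def)

lemma nep_I0: "nep I0 = 2" by (simp add: I0_def)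

lemma run_step:
  assumes run: "is_run I0 T \<eta> \<mu>1 \<omega> (x, a, \<mu>)" and T: "T = 2*h" and h: "h > 0"
    and t: "t \<in> {1..T}"
  shows "x t 0 \<in> {0,1}" "a t 2 0 \<in> {0..1}"
    "\<forall>b\<in>{0..1}. \<bar>1/2 - a t 2 0\<bar> + \<mu> t 2 0 * a t 2 0 \<le> \<bar>1/2 - b\<bar> + \<mu> t 2 0 * b"
    "\<mu> (Suc t) 2 0 = \<mu> t 2 0 + \<eta> * (a t 2 0 - x t 0)"
proof -
  have ep: "epoch I0 T t = (t - 1) div h + 1" using T by (simp add: epoch_def I0_def)
  have "t - 1 < 2 * h" using t T by auto
  then have "(t - 1) div h < 2" by (intro less_mult_imp_div_less) simp
  then have e2: "2 \<in> {epoch I0 T t..nep I0}" by (simp add: ep nep_I0)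
  have R: "feasible I0 \<omega> t (x t)"
    "\<forall>k\<in>{epoch I0 T t..nep I0}. \<forall>i<nres I0.
             a t k i \<in> {0..1} \<and>
             (\<forall>b\<in>{0..1}. dev I0 k i (a t k i) + \<mu> t k i * a t k i \<le> dev I0 k i b + \<mu> t k i * b) \<and>
             \<mu> (Suc t) k i = \<mu> t k i + \<eta> * (a t k i - x t i)"
    using run t unfolding is_run_def by auto
  have n1: "nres I0 = 1" by (simp add: I0_def)
  from R(2) e2 have R2: "a t 2 0 \<in> {0..1} \<and>
             (\<forall>b\<in>{0..1}. dev I0 2 0 (a t 2 0) + \<mu> t 2 0 * a t 2 0 \<le> dev I0 2 0 b + \<mu> t 2 0 * b) \<and>
             \<mu> (Suc t) 2 0 = \<mu> t 2 0 + \<eta> * (a t 2 0 - x t 0)" unfolding n1 by blast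
  have dv: "\<And>b. dev I0 2 0 b = \<bar>1/2 - b\<bar>" by (simp add: I0_def dist_real_def)
  show "x t 0 \<in> {0,1}" using R(1) feasible_I0 by blast
  show "a t 2 0 \<in> {0..1}" using R2 by blast
  show "\<forall>b\<in>{0..1}. \<bar>1/2 - a t 2 0\<bar> + \<mu> t 2 0 * a t 2 0 \<le> \<bar>1/2 - b\<bar> + \<mu> t 2 0 * b"
    using R2 unfolding dv by blast
  show "\<mu> (Suc t) 2 0 = \<mu> t 2 0 + \<eta> * (a t 2 0 - x t 0)" using R2 by blast
qed

lemma run_ep2:
  assumes run: "is_run I0 T \<eta> \<mu>1 \<omega> (x, a, \<mu>)" and T: "T = 2*h" and h: "h > 0"
    and t: "t \<in> {h+1..2*h}" and y: "y 0 \<in> {0,1::real}"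
  shows "x t 0 * (- \<mu> t 2 0) \<le> y 0 * (- \<mu> t 2 0)"
proof -
  have ep: "epoch I0 T t = (t - 1) div h + 1" using T by (simp add: epoch_def I0_def)
  have "(t - 1) div h = 1" using t h by (intro div_nat_eqI) auto
  then have e2: "{epoch I0 T t..nep I0} = {2}" by (simp add: ep nep_I0)
  have "t \<in> {1..T}" using t T by auto
  then have "\<forall>y. feasible I0 \<omega> t y \<longrightarrow>
             (\<Sum>i<nres I0. x t i * (cost I0 (\<omega> t) i - (\<Sum>k\<in>{epoch I0 T t..nep I0}. \<mu> t k i)))
             \<le> (\<Sum>i<nres I0. y i * (cost I0 (\<omega> t) i - (\<Sum>k\<in>{epoch I0 T t..nep I0}. \<mu> t k i)))"
    using run unfolding is_run_def by auto
  then have "\<forall>y. y 0 \<in> {0,1::real} \<longrightarrow> x t 0 * (- \<mu> t 2 0) \<le> y 0 * (- \<mu> t 2 0)"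
    unfolding e2 feasible_I0 by (simp add: I0_def)
  then show ?thesis using y by blast
qed

lemma mu_step_bound:
  assumes run: "is_run I0 T \<eta> \<mu>1 \<omega> (x, a, \<mu>)" and T: "T = 2*h" and h: "h > 0"
    and t: "t \<in> {1..T}" and eta: "\<eta> > 0" and B: "B \<ge> 1 + \<eta>" and mb: "\<bar>\<mu> t 2 0\<bar> \<le> B"
  shows "\<bar>\<mu> (Suc t) 2 0\<bar> \<le> B"
proof -
  note S = run_step[OF run T h t]
  define m where "m = \<mu> t 2 0"
  define a' where "a' = a t 2 0"
  define xx where "xx = x t 0"
  have xx: "xx = 0 \<or> xx = 1" using S(1) xx_def by auto
  have a': "0 \<le> a'" "a' \<le> 1" using S(2) a'_def by auto
  have am: "\<forall>b\<in>{0..1}. \<bar>1/2 - a'\<bar> + m * a' \<le> \<bar>1/2 - b\<bar> + m * b"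
    using S(3) a'_def m_def by simp
  have nx: "\<mu> (Suc t) 2 0 = m + \<eta> * (a' - xx)" using S(4) m_def a'_def xx_def by simp
  have p1: "\<eta> * (a' - xx) \<le> \<eta>"
  proof -
    have "a' - xx \<le> 1" using a' xx by auto
    then have "\<eta> * (a' - xx) \<le> \<eta> * 1" using eta by (intro mult_left_mono) auto
    then show ?thesis by simp
  qed
  have p2: "\<eta> * (a' - xx) \<ge> - \<eta>"
  proof -
    have "a' - xx \<ge> -1" using a' xx by auto
    then have "\<eta> * (a' - xx) \<ge> \<eta> * (-1)" using eta by (intro mult_left_mono) auto
    then show ?thesis by simp
  qed
  have mB: "\<bar>m\<bar> \<le> B" using mb m_def by simp
  show ?thesis
  proof (cases "m > 1")
    case True
    have "\<bar>1/2 - a'\<bar> + m * a' \<le> \<bar>1/2 - 0\<bar> + m * 0" using bspec[OF am, of "0"] by simp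
    then have "(m - 1) * a' \<le> 0" using abs_ge_self[of "1/2 - a'"] by (simp add: algebra_simps)
    then have "a' \<le> 0" using True by (simp add: mult_le_0_iff)
    then have "a' = 0" using a' by simp
    then have "\<eta> * (a' - xx) \<le> 0" using xx eta by auto
    then show ?thesis unfolding nx using mB p2 B True by auto
  next
    case False
    show ?thesis
    proof (cases "m < -1")
      case True
      have "\<bar>1/2 - a'\<bar> + m * a' \<le> \<bar>1/2 - 1\<bar> + m * 1" using bspec[OF am, of "1"] by simp
      then have "(m + 1) * (a' - 1) \<le> 0" by (auto simp: algebra_simps abs_if split: if_splits)
      then have "a' \<ge> 1" using True by (simp add: mult_le_0_iff)
      then have "a' = 1" using a' by simp
      then have "\<eta> * (a' - xx) \<ge> 0" using xx eta by auto
      then show ?thesis unfolding nx using mB p1 B True by auto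
    next
      case False2: False
      then show ?thesis unfolding nx using False p1 p2 B by auto
    qed
  qed
qed

lemma mu_bound:
  assumes run: "is_run I0 T \<eta> \<mu>1 \<omega> (x, a, \<mu>)" and T: "T = 2*h" and h: "h > 0"
    and eta: "\<eta> > 0"
  shows "1 \<le> t \<Longrightarrow> t \<le> Suc T \<Longrightarrow> \<bar>\<mu> t 2 0\<bar> \<le> \<bar>\<mu>1 2 0\<bar> + 1 + \<eta>"
proof (induction t)
  case 0
  then show ?case by simp
next
  case (Suc t)
  show ?case
  proof (cases "t = 0")
    case True
    have "\<forall>k\<in>{1..nep I0}. \<forall>i<nres I0. \<mu> 1 k i = \<mu>1 k i" using run unfolding is_run_def by auto
    then have "\<mu> 1 2 0 = \<mu>1 2 0" by (simp add: I0_def)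
    then show ?thesis using True eta by simp
  next
    case False
    then have "\<bar>\<mu> t 2 0\<bar> \<le> \<bar>\<mu>1 2 0\<bar> + 1 + \<eta>" using Suc by simp
    moreover have "t \<in> {1..T}" using False Suc by auto
    ultimately show ?thesis using mu_step_bound[OF run T h _ eta] by simp
  qed
qed

lemma ep2_step:
  assumes run: "is_run I0 T \<eta> \<mu>1 \<omega> (x, a, \<mu>)" and T: "T = 2*h" and h: "h > 0"
    and t: "t \<in> {h+1..2*h}" and eta: "\<eta> > 0"
  shows "\<mu> (Suc t) 2 0 - \<mu> t 2 0 \<ge> \<eta>/2 - 3*\<eta>/2 * x t 0"
proof -
  have t1: "t \<in> {1..T}" using t T by auto
  note S = run_step[OF run T h t1]
  define m where "m = \<mu> t 2 0"
  define a' where "a' = a t 2 0"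
  define xx where "xx = x t 0"
  have xx: "xx = 0 \<or> xx = 1" using S(1) xx_def by auto
  have a': "0 \<le> a'" "a' \<le> 1" using S(2) a'_def by auto
  have am: "\<forall>b\<in>{0..1}. \<bar>1/2 - a'\<bar> + m * a' \<le> \<bar>1/2 - b\<bar> + m * b"
    using S(3) a'_def m_def by simp
  have nx: "\<mu> (Suc t) 2 0 = m + \<eta> * (a' - xx)" using S(4) m_def a'_def xx_def by simp
  show ?thesis
  proof (cases "xx = 0")
    case True
    have "xx * (- m) \<le> 1 * (- m)"
      using run_ep2[OF run T h t, of "\<lambda>_. 1"] xx_def m_def by simp
    then have m0: "m \<le> 0" using True by simp
    have "\<bar>1/2 - a'\<bar> + m * a' \<le> \<bar>1/2 - 1/2\<bar> + m * (1/2)" using bspec[OF am, of "1/2"] by simp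
    then have "a' \<ge> 1/2"
    proof -
      assume H: "\<bar>1/2 - a'\<bar> + m * a' \<le> \<bar>1/2 - 1/2\<bar> + m * (1/2)"
      show ?thesis
      proof (rule ccontr)
        assume "\<not> a' \<ge> 1/2"
        then have lt: "a' < 1/2" by simp
        then have "(1/2 - a') \<le> m * (1/2 - a')" using H by (simp add: algebra_simps)
        moreover have "m * (1/2 - a') \<le> 0" using m0 lt by (simp add: mult_le_0_iff)
        ultimately show False using lt by linarith
      qed
    qed
    then have "\<eta> * a' \<ge> \<eta> * (1/2)" using eta by (intro mult_left_mono) auto
    then show ?thesis using nx True xx_def m_def by simp
  next
    case False
    then have x1: "xx = 1" using xx by simp
    have "a' - xx \<ge> -1" using a' xx by auto
    then have "\<eta> * (a' - xx) \<ge> \<eta> * (-1)" using eta by (intro mult_left_mono) auto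
    then show ?thesis using nx x1 xx_def m_def by simp
  qed
qed

lemma offline_le0:
  assumes h: "h > 0" and T: "T = 2 * h"
  shows "offline_opt I0 T \<omega> \<le> 0"
proof -
  define x0 :: "nat \<Rightarrow> nat \<Rightarrow> real" where "x0 = (\<lambda>t i. if t \<le> h then 1 else 0)"
  have f0: "\<forall>t\<in>{1..T}. feasible I0 \<omega> t (x0 t)" by (simp add: feasible_I0 x0_def)
  have s1: "(\<Sum>t\<in>{1..h}. x0 t 0) = real h" by (simp add: x0_def)
  have "{1..2*h} = {1..h} \<union> {h+1..2*h}" by auto
  then have sp: "(\<Sum>t\<in>{1..2*h}. x0 t 0) = (\<Sum>t\<in>{1..h}. x0 t 0) + (\<Sum>t\<in>{h+1..2*h}. x0 t 0)"
    by (simp add: sum.union_disjoint)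
  have s2: "(\<Sum>t\<in>{h+1..2*h}. x0 t 0) = 0" by (simp add: x0_def)
  have c0: "total_cost I0 T \<omega> x0 = 0" unfolding cost_eq[OF h T] sp s1 s2 by simp
  have bdd: "bdd_below {total_cost I0 T \<omega> x | x. \<forall>t\<in>{1..T}. feasible I0 \<omega> t (x t)}"
  proof (rule bdd_belowI[where m = 0], clarify)
    fix x assume fx: "\<forall>t\<in>{1..T}. feasible I0 \<omega> t (x t)"
    have "(\<Sum>t\<in>{h+1..2*h}. x t 0) \<ge> 0"
    proof (rule sum_nonneg)
      fix t assume "t \<in> {h+1..2*h}"
      then have "t \<in> {1..T}" using T by auto
      then have "x t 0 \<in> {0,1}" using fx feasible_I0 by blast
      then show "x t 0 \<ge> 0" by auto
    qed
    then show "0 \<le> total_cost I0 T \<omega> x" using cost_lb[OF h T, where \<omega>=\<omega> and x=x] by linarith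
  qed
  have "offline_opt I0 T \<omega> \<le> total_cost I0 T \<omega> x0"
    unfolding offline_opt_def by (rule cInf_lower[OF _ bdd]) (use f0 in blast)
  then show ?thesis using c0 by simp
qed

lemma arrivals_card: "card (arrivals I0 T) = 1"
  by (simp add: arrivals_def I0_def card_PiE)

lemma path_prob1: "path_prob I0 T \<omega> = 1"
  by (simp add: path_prob_def I0_def)

theorem proposition2:
  shows "\<exists>I. valid_instance I \<and>
    (\<forall>\<eta>>0. \<forall>\<mu>1. \<exists>C>0. \<exists>T0::nat. \<forall>T run.
       T \<ge> T0 \<and> nep I dvd T \<and> (\<forall>\<omega>\<in>arrivals I T. is_run I T \<eta> \<mu>1 \<omega> (run \<omega>))
       \<longrightarrow> expected_regret I T run \<ge> C * real T)"
proof (intro exI[of _ I0] conjI valid_I0 allI impI)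
  fix \<eta> :: real and \<mu>1 :: "nat \<Rightarrow> nat \<Rightarrow> real"
  assume eta: "\<eta> > 0"
  define B where "B = \<bar>\<mu>1 2 0\<bar> + 1 + \<eta>"
  have B1: "B \<ge> 1 + \<eta>" by (simp add: B_def)
  define T0 where "T0 = 2 * nat \<lceil>8 * B / \<eta>\<rceil> + 2"
  show "\<exists>C>0. \<exists>T0::nat. \<forall>T run.
       T \<ge> T0 \<and> nep I0 dvd T \<and> (\<forall>\<omega>\<in>arrivals I0 T. is_run I0 T \<eta> \<mu>1 \<omega> (run \<omega>))
       \<longrightarrow> expected_regret I0 T run \<ge> C * real T"
  proof (intro exI[of _ "1/12"] conjI exI[of _ T0] allI impI)
    fix T run
    assume A: "T0 \<le> T \<and> nep I0 dvd T \<and> (\<forall>\<omega>\<in>arrivals I0 T. is_run I0 T \<eta> \<mu>1 \<omega> (run \<omega>))"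
    obtain h where T: "T = 2 * h" using A by (auto simp: nep_I0)
    have hge: "h \<ge> nat \<lceil>8 * B / \<eta>\<rceil> + 1" using A T T0_def by simp
    then have h: "h > 0" by simp
    have hB: "real h \<ge> 8 * B / \<eta>" using hge by linarith
    have per: "total_cost I0 T \<omega> (fst (run \<omega>)) - offline_opt I0 T \<omega> \<ge> 1/12 * real T"
      if w: "\<omega> \<in> arrivals I0 T" for \<omega>
    proof -
      obtain x a \<mu> where r: "run \<omega> = (x, a, \<mu>)" by (cases "run \<omega>") auto
      have run: "is_run I0 T \<eta> \<mu>1 \<omega> (x, a, \<mu>)" using A w r by auto
      have mb: "\<bar>\<mu> t 2 0\<bar> \<le> B" if "1 \<le> t" "t \<le> Suc T" for t
        using mu_bound[OF run T h eta that] B_def by simp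
      have tel: "(\<Sum>t\<in>{h+1..2*h}. \<mu> (Suc t) 2 0 - \<mu> t 2 0) = \<mu> (Suc (2*h)) 2 0 - \<mu> (h+1) 2 0"
        by (rule sum_Suc_diff) simp
      have "\<mu> (Suc (2*h)) 2 0 - \<mu> (h+1) 2 0 \<le> 2 * B"
        using mb[of "Suc (2*h)"] mb[of "h+1"] T by auto
      moreover have "(\<Sum>t\<in>{h+1..2*h}. \<eta>/2 - 3*\<eta>/2 * x t 0) \<le> (\<Sum>t\<in>{h+1..2*h}. \<mu> (Suc t) 2 0 - \<mu> t 2 0)"
        by (rule sum_mono) (rule ep2_step[OF run T h _ eta])
      moreover have "(\<Sum>t\<in>{h+1..2*h}. \<eta>/2 - 3*\<eta>/2 * x t 0) = \<eta>/2 * real h - 3*\<eta>/2 * (\<Sum>t\<in>{h+1..2*h}. x t 0)"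
        by (simp add: sum_subtractf sum_distrib_left)
      ultimately have key: "\<eta>/2 * real h - 3*\<eta>/2 * (\<Sum>t\<in>{h+1..2*h}. x t 0) \<le> 2 * B"
        using tel by linarith
      have "8 * B \<le> \<eta> * real h" using hB eta by (simp add: field_simps)
      moreover have "\<eta>/2 * real h - 3*\<eta>/2 * (\<Sum>t\<in>{h+1..2*h}. x t 0) = (\<eta> * real h - 3 * \<eta> * (\<Sum>t\<in>{h+1..2*h}. x t 0)) / 2"
        by (simp add: field_simps)
      ultimately have "\<eta> * real h \<le> \<eta> * (6 * (\<Sum>t\<in>{h+1..2*h}. x t 0))"
        using key by (simp add: algebra_simps)
      then have N2: "(\<Sum>t\<in>{h+1..2*h}. x t 0) \<ge> real h / 6"
        using eta by (simp add: mult_le_cancel_left_pos)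
      have "total_cost I0 T \<omega> x \<ge> (\<Sum>t\<in>{h+1..2*h}. x t 0)" by (rule cost_lb[OF h T])
      then show ?thesis using N2 offline_le0[OF h T, of \<omega>] r T by simp
    qed
    have "expected_regret I0 T run \<ge> (\<Sum>\<omega>\<in>arrivals I0 T. 1/12 * real T)"
      unfolding expected_regret_def path_prob1 by (rule sum_mono) (use per in simp)
    also have "(\<Sum>\<omega>\<in>arrivals I0 T. 1/12 * real T) = 1/12 * real T"
      by (simp add: arrivals_card)
    finally show "expected_regret I0 T run \<ge> 1/12 * real T" by simp
  qed simp
qed

end
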